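(* Let $I_1\subset\mathbb{R}$ be an open interval and $I_2$ an open, relatively compact subinterval of $I_1$. For every integer $n\ge1$ and every $\varepsilon>0$ there exists $\delta>0$ such that for every $C^1$ map $h:I_1\to\mathbb{R}$ with $\|h-\mathrm{id}\|_{1,I_1}<\delta$ and every $x\in I_2$, the iterate $h^n(x)$ is defined and $$|(h^n(x)-x)-n(h(x)-x)|\le\varepsilon\,|h(x)-x|.$$
   Context: For an open set $J\subset\mathbb{R}$ and a $C^1$ map $u$ on $J$, $\|u\|_{1,J}=\sup_{x\in J}(|u(x)|+|u'(x)|)$. *)

theory Defs
  imports "HOL-Analysis.Analysis"
begin

definition C1_norm :: "real set \<Rightarrow> (real \<Rightarrow> real) \<Rightarrow> real" where
  "C1_norm J u = (SUP x\<in>J. \<bar>u x\<bar> + \<bar>deriv u x\<bar>)"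

definition C1_norm_finite :: "real set \<Rightarrow> (real \<Rightarrow> real) \<Rightarrow> bool" where
  "C1_norm_finite J u = bdd_above ((\<lambda>x. \<bar>u x\<bar> + \<bar>deriv u x\<bar>) ` J)"

end

theory Submission
  imports Defs
begin

theorem lemma3p10:
  fixes I1 I2 :: "real set" and n :: nat and \<epsilon> :: real
  assumes "open I1" and "is_interval I1" and "I1 \<noteq> {}"
    and "open I2" and "is_interval I2"
    and "compact (closure I2)" and "closure I2 \<subseteq> I1"
    and "n \<ge> 1" and "\<epsilon> > 0"
  shows "\<exists>\<delta>>0. \<forall>h :: real \<Rightarrow> real.
           h C1_differentiable_on I1 \<and>
           C1_norm_finite I1 (\<lambda>x. h x - x) \<and> C1_norm I1 (\<lambda>x. h x - x) < \<delta> \<longrightarrow>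
           (\<forall>x\<in>I2. (\<forall>k<n. (h ^^ k) x \<in> I1) \<and>
              \<bar>((h ^^ n) x - x) - real n * (h x - x)\<bar> \<le> \<epsilon> * \<bar>h x - x\<bar>)"
proof -
  obtain d where d: "d > 0" "(\<Union>x\<in>closure I2. ball x d) \<subseteq> I1"
    using compact_subset_open_imp_ball_epsilon_subset[OF assms(6) assms(1) assms(7)] by blast
  define C where "C = real n * 2 ^ n"
  have C0: "C \<ge> 0" unfolding C_def by simp
  define \<delta> where "\<delta> = min 1 (min (d / (real n + 1)) (\<epsilon> / (real n * C + 1)))"
  have dpos: "\<delta> > 0" unfolding \<delta>_def using d assms C0 by (simp add: add_nonneg_pos)
  have d1: "\<delta> \<le> 1" unfolding \<delta>_def by simp
  have d2: "\<delta> \<le> d / (real n + 1)" unfolding \<delta>_def by simp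
  have d3: "\<delta> \<le> \<epsilon> / (real n * C + 1)" unfolding \<delta>_def by simp
  have d2': "real n * \<delta> < d"
  proof -
    have "(real n + 1) * \<delta> \<le> d" using d2 by (simp add: field_simps)
    then show ?thesis using dpos by (simp add: algebra_simps)
  qed
  have d3': "real n * C * \<delta> \<le> \<epsilon>"
  proof -
    have pp: "real n * C + 1 > 0" using C0 by (simp add: add_nonneg_pos)
    have "(real n * C + 1) * \<delta> \<le> \<epsilon>" using d3 pp by (simp add: pos_le_divide_eq mult.commute)
    then show ?thesis using dpos by (simp add: algebra_simps)
  qed
  have cvx: "convex I1" using assms(2) by (simp add: is_interval_convex)
  show ?thesis
  proof (intro exI[of _ \<delta>] conjI allI impI dpos)
    fix h :: "real \<Rightarrow> real"
    assume H: "h C1_differentiable_on I1 \<and>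
           C1_norm_finite I1 (\<lambda>x. h x - x) \<and> C1_norm I1 (\<lambda>x. h x - x) < \<delta>"
    define g where "g = (\<lambda>x. h x - x)"
    obtain D where D: "\<And>y. y \<in> I1 \<Longrightarrow> (h has_vector_derivative D y) (at y)"
      using H unfolding C1_differentiable_on_def by blast
    have gD: "(g has_field_derivative (D y - 1)) (at y)" if "y \<in> I1" for y
    proof -
      have "(h has_field_derivative D y) (at y)"
        using D[OF that] by (simp add: has_real_derivative_iff_has_vector_derivative)
      then show ?thesis unfolding g_def by (auto intro!: derivative_eq_intros)
    qed
    have bnd: "\<bar>g y\<bar> + \<bar>deriv g y\<bar> < \<delta>" if "y \<in> I1" for y
    proof -
      have "\<bar>g y\<bar> + \<bar>deriv g y\<bar> \<le> C1_norm I1 g"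
        unfolding C1_norm_def
        by (rule cSUP_upper[OF that]) (use H in \<open>simp add: C1_norm_finite_def g_def\<close>)
      then show ?thesis using H g_def by simp
    qed
    have gb: "\<bar>g y\<bar> < \<delta>" if "y \<in> I1" for y using bnd[OF that] by simp
    have Db: "\<bar>D y - 1\<bar> \<le> \<delta>" if "y \<in> I1" for y
      using bnd[OF that] DERIV_imp_deriv[OF gD[OF that]] by simp
    have lip: "\<bar>g a - g b\<bar> \<le> \<delta> * \<bar>a - b\<bar>" if "a \<in> I1" "b \<in> I1" for a b
      using field_differentiable_bound[OF cvx, of g "\<lambda>z. D z - 1" \<delta> a b]
        gD Db that by (simp add: has_field_derivative_at_within)
    have hg: "h y = y + g y" for y unfolding g_def by simp
    show "\<forall>x\<in>I2. (\<forall>k<n. (h ^^ k) x \<in> I1) \<and>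
              \<bar>((h ^^ n) x - x) - real n * (h x - x)\<bar> \<le> \<epsilon> * \<bar>h x - x\<bar>"
    proof
      fix x assume x: "x \<in> I2"
      have xc: "x \<in> closure I2" using x closure_subset by blast
      have ballI: "y \<in> I1" if "\<bar>y - x\<bar> < d" for y
      proof -
        have "y \<in> ball x d" using that by (simp add: dist_real_def abs_minus_commute)
        then show ?thesis using d(2) xc by blast
      qed
      have xI: "x \<in> I1" using ballI d by simp
      have ind: "\<bar>(h ^^ k) x - x\<bar> \<le> real k * \<delta> \<and> \<bar>(h ^^ k) x - x\<bar> \<le> real k * 2 ^ k * \<bar>g x\<bar>"
        if "k < n" for k
        using that
      proof (induction k)
        case 0 then show ?case by simp
      next
        case (Suc k)
        let ?y = "(h ^^ k) x"
        from Suc have IH: "\<bar>?y - x\<bar> \<le> real k * \<delta>" "\<bar>?y - x\<bar> \<le> real k * 2 ^ k * \<bar>g x\<bar>" by auto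
        have "real k * \<delta> < d" using d2' Suc.prems dpos
          by (smt (verit, ccfv_SIG) of_nat_less_iff mult_right_mono less_imp_le Suc_lessD)
        then have yI: "?y \<in> I1" using ballI IH by simp
        have e: "(h ^^ Suc k) x - x = (?y - x) + g ?y" using hg by simp
        have A: "\<bar>g ?y\<bar> < \<delta>" using gb yI .
        have B: "\<bar>g ?y\<bar> \<le> \<bar>g x\<bar> + \<delta> * \<bar>?y - x\<bar>" using lip[OF yI xI] by simp
        have B2: "\<delta> * \<bar>?y - x\<bar> \<le> \<bar>?y - x\<bar>" using d1 dpos by (simp add: mult_left_le_one_le)
        have "\<bar>(h ^^ Suc k) x - x\<bar> \<le> real k * \<delta> + \<delta>" using e A IH by simp
        moreover have "\<bar>(h ^^ Suc k) x - x\<bar> \<le> real (Suc k) * 2 ^ Suc k * \<bar>g x\<bar>"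
        proof -
          have "\<bar>(h ^^ Suc k) x - x\<bar> \<le> 2 * (real k * 2 ^ k * \<bar>g x\<bar>) + \<bar>g x\<bar>"
            using e B B2 IH by (simp only: abs_triangle_ineq) (smt (verit) abs_triangle_ineq)
          also have "\<dots> \<le> real (Suc k) * 2 ^ Suc k * \<bar>g x\<bar>"
          proof -
            have "(1::real) \<le> 2 ^ k" by simp
            then have "\<bar>g x\<bar> \<le> 2 ^ k * \<bar>g x\<bar>" by (simp add: mult_le_cancel_right1)
            then show ?thesis by (simp add: algebra_simps)
          qed
          finally show ?thesis .
        qed
        ultimately show ?case by (simp add: algebra_simps)
      qed
      have inI: "(h ^^ k) x \<in> I1" if "k < n" for k
      proof -
        have "real k * \<delta> \<le> real n * \<delta>" using that dpos by simp
        then show ?thesis using ind[OF that] d2' ballI by simp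
      qed
      have tele: "(h ^^ n) x - x = (\<Sum>k<n. (h ^^ Suc k) x - (h ^^ k) x)"
        using sum_lessThan_telescope[of "\<lambda>k. (h ^^ k) x" n] by simp
      have "((h ^^ n) x - x) - real n * (h x - x) = (\<Sum>k<n. g ((h ^^ k) x) - g x)"
        unfolding tele by (simp add: sum_subtractf g_def)
      then have "\<bar>((h ^^ n) x - x) - real n * (h x - x)\<bar> \<le> (\<Sum>k<n. \<bar>g ((h ^^ k) x) - g x\<bar>)"
        by (simp add: sum_abs)
      also have "\<dots> \<le> (\<Sum>k<n. \<delta> * (C * \<bar>g x\<bar>))"
      proof (rule sum_mono)
        fix k assume "k \<in> {..<n}"
        then have k: "k < n" by simp
        have "\<bar>g ((h ^^ k) x) - g x\<bar> \<le> \<delta> * \<bar>(h ^^ k) x - x\<bar>" using lip[OF inI[OF k] xI] .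
        also have "\<dots> \<le> \<delta> * (real k * 2 ^ k * \<bar>g x\<bar>)"
          using ind[OF k] dpos by (simp add: mult_left_mono)
        also have "\<dots> \<le> \<delta> * (C * \<bar>g x\<bar>)"
        proof -
          have "real k * 2 ^ k \<le> real n * 2 ^ n" using k
            by (intro mult_mono) (auto intro: power_increasing)
          then show ?thesis unfolding C_def using dpos
            by (intro mult_left_mono mult_right_mono) auto
        qed
        finally show "\<bar>g ((h ^^ k) x) - g x\<bar> \<le> \<delta> * (C * \<bar>g x\<bar>)" .
      qed
      also have "\<dots> = (real n * C * \<delta>) * \<bar>g x\<bar>" by (simp add: algebra_simps)
      also have "\<dots> \<le> \<epsilon> * \<bar>g x\<bar>" using d3' by (simp add: mult_right_mono)
      finally show "(\<forall>k<n. (h ^^ k) x \<in> I1) \<and>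
              \<bar>((h ^^ n) x - x) - real n * (h x - x)\<bar> \<le> \<epsilon> * \<bar>h x - x\<bar>"
        using inI by (simp add: g_def)
    qed
  qed
qed

end
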